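(* If $Y^*\in\mathcal L^1(\mathcal Q)$ and $\rho_{\mathcal Q}$ is continuous from above at $0$, then $\overline{\mathcal Q}$ is compact w.r.t. the topology $\sigma(\overline{\mathcal Q},\mathcal X)$, $co(\mathcal Q)$ is a $\sigma(\overline{\mathcal Q},\mathcal X)$-dense subset of $\overline{\mathcal Q}$, and every member of $\overline{\mathcal Q}$ is absolutely continuous w.r.t. $\mathrm P$.
   Context: Let $(\Omega,\mathcal F,(\mathcal F_t)_{0\le t\le T},\mathrm P)$ be a filtered probability space ($0<T<\infty$) with right-continuous filtration, $\mathcal F=\mathcal F_T$, $\mathcal F_0$ trivial and containing all $\mathrm P$-null sets. $\mathcal Q$ is a nonempty set of probability measures on $\mathcal F$, each absolutely continuous w.r.t. $\mathrm P$, $co(\mathcal Q)$ its convex hull. $\mathcal L^1(\mathcal Q)$ is the set of random variables $X$ with $\sup_{\mathrm Q\in\mathcal Q}\mathbb E_{\mathrm Q}[|X|]<\infty$. $Y=(Y_t)_{0\le t\le T}$ is a right-continuous adapted process with bounded paths, quasi left-uppersemicontinuous w.r.t. $\mathrm P$, and $Y^*:=\sup_{t\in[0,T]}|Y_t|$. $\mathcal X$ is the set of random variables $X$ with $|X|\le C(Y^*+1)$ $\mathrm P$-a.s. for some $C>0$; $\rho_{\mathcal Q}(X)=\sup_{\mathrm Q\in\mathcal Q}\mathbb E_{\mathrm Q}[X]$ for $X\in\mathcal X$; $\rho_{\mathcal Q}$ is continuous from above at $0$ if $\rho_{\mathcal Q}(X_n)\searrow0$ whenever $X_n\in\mathcal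 X$, $X_n\searrow0$ $\mathrm P$-a.s. $\overline{\mathcal Q}$ is the set of probability measures $\mathrm Q$ on $\mathcal F$ such that every $X\in\mathcal X$ is $\mathrm Q$-integrable and $\mathbb E_{\mathrm Q}[X]\le\rho_{\mathcal Q}(X)$ for all $X\in\mathcal X$. $\sigma(\overline{\mathcal Q},\mathcal X)$ is the coarsest topology on $\overline{\mathcal Q}$ making all maps $\mathrm Q\mapsto\mathbb E_{\mathrm Q}[X]$, $X\in\mathcal X$, continuous. *)

theory Defs
  imports "HOL-Probability.Probability"
begin

text \<open>The filtered probability space: P is the measure M, the filtration is Fs,
  indexed by the time interval [0,T].\<close>

definition filtration_std :: "'a measure \<Rightarrow> real \<Rightarrow> (real \<Rightarrow> 'a set set) \<Rightarrow> bool" where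
  "filtration_std M T Fs \<longleftrightarrow>
     (\<forall>t\<in>{0..T}. sigma_algebra (space M) (Fs t) \<and> Fs t \<subseteq> sets M)
   \<and> (\<forall>s t. 0 \<le> s \<longrightarrow> s \<le> t \<longrightarrow> t \<le> T \<longrightarrow> Fs s \<subseteq> Fs t)
   \<and> (\<forall>t\<in>{0..<T}. Fs t = (\<Inter>s\<in>{t<..T}. Fs s))
   \<and> Fs T = sets M
   \<and> null_sets M \<subseteq> Fs 0
   \<and> (\<forall>A\<in>Fs 0. measure M A = 0 \<or> measure M A = 1)"

definition stopping_time_std :: "'a measure \<Rightarrow> real \<Rightarrow> (real \<Rightarrow> 'a set set) \<Rightarrow> ('a \<Rightarrow> real) \<Rightarrow> bool" where
  "stopping_time_std M T Fs \<tau> \<longleftrightarrow>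
     (\<forall>\<omega>\<in>space M. 0 \<le> \<tau> \<omega> \<and> \<tau> \<omega> \<le> T)
   \<and> (\<forall>t\<in>{0..T}. {\<omega>\<in>space M. \<tau> \<omega> \<le> t} \<in> Fs t)"

definition quasi_left_usc :: "'a measure \<Rightarrow> real \<Rightarrow> (real \<Rightarrow> 'a set set) \<Rightarrow> (real \<Rightarrow> 'a \<Rightarrow> real) \<Rightarrow> bool" where
  "quasi_left_usc M T Fs Y \<longleftrightarrow>
     (\<forall>\<tau>s \<tau>. (\<forall>n. stopping_time_std M T Fs (\<tau>s n)) \<longrightarrow> stopping_time_std M T Fs \<tau> \<longrightarrow>
        (AE \<omega> in M. incseq (\<lambda>n. \<tau>s n \<omega>) \<and> (\<lambda>n. \<tau>s n \<omega>) \<longlonglongrightarrow> \<tau> \<omega>) \<longrightarrow>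
        (AE \<omega> in M. limsup (\<lambda>n. ereal (Y (\<tau>s n \<omega>) \<omega>)) \<le> ereal (Y (\<tau> \<omega>) \<omega>)))"

definition process_std :: "'a measure \<Rightarrow> real \<Rightarrow> (real \<Rightarrow> 'a set set) \<Rightarrow> (real \<Rightarrow> 'a \<Rightarrow> real) \<Rightarrow> bool" where
  "process_std M T Fs Y \<longleftrightarrow>
     (\<forall>t\<in>{0..T}. Y t \<in> measurable (sigma (space M) (Fs t)) borel)
   \<and> (\<forall>\<omega>\<in>space M. \<forall>t\<in>{0..<T}. continuous (at_right t) (\<lambda>s. Y s \<omega>))
   \<and> (\<forall>\<omega>\<in>space M. \<exists>B. \<forall>t\<in>{0..T}. \<bar>Y t \<omega>\<bar> \<le> B)
   \<and> quasi_left_usc M T Fs Y"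

definition Ystar :: "real \<Rightarrow> (real \<Rightarrow> 'a \<Rightarrow> real) \<Rightarrow> 'a \<Rightarrow> real" where
  "Ystar T Y \<omega> = (SUP t\<in>{0..T}. \<bar>Y t \<omega>\<bar>)"

definition prob_on :: "'a measure \<Rightarrow> 'a measure \<Rightarrow> bool" where
  "prob_on M Q \<longleftrightarrow> prob_space Q \<and> sets Q = sets M"

definition L1Q :: "'a measure \<Rightarrow> 'a measure set \<Rightarrow> ('a \<Rightarrow> real) \<Rightarrow> bool" where
  "L1Q M Qs X \<longleftrightarrow> X \<in> borel_measurable M \<and>
     (SUP Q\<in>Qs. \<integral>\<^sup>+ \<omega>. ennreal \<bar>X \<omega>\<bar> \<partial>Q) < \<infinity>"

definition Xspace :: "'a measure \<Rightarrow> ('a \<Rightarrow> real) \<Rightarrow> ('a \<Rightarrow> real) set" where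
  "Xspace M Ys = {X \<in> borel_measurable M. \<exists>C>0. AE \<omega> in M. \<bar>X \<omega>\<bar> \<le> C * (Ys \<omega> + 1)}"

text \<open>\<rho>_Q(X) = sup over Q of E_Q[X] (real-valued supremum; finite when Y^* \<in> L^1(Q)).\<close>
definition rhoQ :: "'a measure set \<Rightarrow> ('a \<Rightarrow> real) \<Rightarrow> real" where
  "rhoQ Qs X = (SUP Q\<in>Qs. integral\<^sup>L Q X)"

definition cont_from_above_at_0 :: "'a measure \<Rightarrow> ('a \<Rightarrow> real) \<Rightarrow> 'a measure set \<Rightarrow> bool" where
  "cont_from_above_at_0 M Ys Qs \<longleftrightarrow>
     (\<forall>Xn :: nat \<Rightarrow> 'a \<Rightarrow> real. (\<forall>n. Xn n \<in> Xspace M Ys) \<longrightarrow>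
        (AE \<omega> in M. decseq (\<lambda>n. Xn n \<omega>) \<and> (\<lambda>n. Xn n \<omega>) \<longlonglongrightarrow> 0) \<longrightarrow>
        (\<lambda>n. rhoQ Qs (Xn n)) \<longlonglongrightarrow> 0)"

definition Qbar :: "'a measure \<Rightarrow> ('a \<Rightarrow> real) \<Rightarrow> 'a measure set \<Rightarrow> 'a measure set" where
  "Qbar M Ys Qs = {Q. prob_on M Q \<and>
     (\<forall>X\<in>Xspace M Ys. integrable Q X \<and> integral\<^sup>L Q X \<le> rhoQ Qs X)}"

definition sigmaQX :: "'a measure \<Rightarrow> ('a \<Rightarrow> real) \<Rightarrow> 'a measure set \<Rightarrow> 'a measure topology" where
  "sigmaQX M Ys Qs = pullback_topology (Qbar M Ys Qs)
      (\<lambda>Q. restrict (\<lambda>X. integral\<^sup>L Q X) (Xspace M Ys))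
      (product_topology (\<lambda>_. euclideanreal) (Xspace M Ys))"

definition co_measures :: "'a measure \<Rightarrow> 'a measure set \<Rightarrow> 'a measure set" where
  "co_measures M Qs = {\<mu>. sets \<mu> = sets M \<and>
     (\<exists>n::nat. \<exists>c :: nat \<Rightarrow> real. \<exists>Q :: nat \<Rightarrow> 'a measure. n \<ge> 1 \<and>
        (\<forall>i<n. c i \<ge> 0 \<and> Q i \<in> Qs) \<and> (\<Sum>i<n. c i) = 1 \<and>
        (\<forall>A\<in>sets M. emeasure \<mu> A = (\<Sum>i<n. ennreal (c i) * emeasure (Q i) A)))}"

end

theory Submission
  imports Defs
begin


lemma pfm: "prob_space Q \<Longrightarrow> finite_measure Q"
  by (simp add: prob_space_def)

lemma p_int_const: "prob_space Q \<Longrightarrow> integrable Q (\<lambda>_. c::real)"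
  by (rule finite_measure.integrable_const[OF pfm])

lemma p_em: "prob_space Q \<Longrightarrow> emeasure Q A = ennreal (measure Q A)"
  by (rule finite_measure.emeasure_eq_measure[OF pfm])

lemma p_integral_const: "prob_space Q \<Longrightarrow> integral\<^sup>L Q (\<lambda>_. c) = (c::real)"
  by (simp add: prob_space.prob_space)

lemma meas_Q: "sets Q = sets M \<Longrightarrow> f \<in> borel_measurable M \<Longrightarrow> f \<in> borel_measurable Q"
  using measurable_cong_sets[of Q M borel borel] by blast

locale Lsetting =
  fixes M :: "'a measure" and Ys :: "'a \<Rightarrow> real" and Qs :: "'a measure set"
  assumes M: "prob_space M"
    and Qne: "Qs \<noteq> {}"
    and Qs: "\<And>Q. Q \<in> Qs \<Longrightarrow> prob_on M Q \<and> absolutely_continuous M Q"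
    and Ys_meas: "Ys \<in> borel_measurable M"
    and Ys_nn: "\<And>\<omega>. \<omega> \<in> space M \<Longrightarrow> 0 \<le> Ys \<omega>"
    and Ys_L1: "(SUP Q\<in>Qs. \<integral>\<^sup>+ \<omega>. ennreal \<bar>Ys \<omega>\<bar> \<partial>Q) < \<infinity>"
    and cont: "cont_from_above_at_0 M Ys Qs"
begin

abbreviation "XS \<equiv> Xspace M Ys"
abbreviation "\<rho> \<equiv> rhoQ Qs"

lemma Qs_prob: "Q \<in> Qs \<Longrightarrow> prob_space Q" and Qs_sets: "Q \<in> Qs \<Longrightarrow> sets Q = sets M"
  and Qs_ac: "Q \<in> Qs \<Longrightarrow> absolutely_continuous M Q"
  using Qs by (auto simp: prob_on_def)

lemma Qs_space: "Q \<in> Qs \<Longrightarrow> space Q = space M"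
  using Qs_sets sets_eq_imp_space_eq by blast

lemma XS_meas: "X \<in> XS \<Longrightarrow> X \<in> borel_measurable M"
  by (simp add: Xspace_def)

lemma XS_dom:
  assumes "Z \<in> borel_measurable M" "X \<in> XS" "c \<ge> 0" "AE \<omega> in M. \<bar>Z \<omega>\<bar> \<le> \<bar>X \<omega>\<bar> + c"
  shows "Z \<in> XS"
proof -
  obtain C where C: "C > 0" "AE \<omega> in M. \<bar>X \<omega>\<bar> \<le> C * (Ys \<omega> + 1)"
    using assms(2) by (auto simp: Xspace_def)
  have "AE \<omega> in M. \<bar>Z \<omega>\<bar> \<le> (C + c) * (Ys \<omega> + 1)"
    using C(2) assms(4) AE_space
  proof eventually_elim
    case (elim \<omega>)
    then have "0 \<le> Ys \<omega>" using Ys_nn by auto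
    then have "c \<le> c * (Ys \<omega> + 1)" using assms(3) by (simp add: mult_le_cancel_left1)
    with elim show ?case by (simp add: distrib_right)
  qed
  then show ?thesis using assms(1) C(1) assms(3) unfolding Xspace_def
    by (auto intro!: exI[of _ "C + c"])
qed

lemma XS_const: "(\<lambda>_. c) \<in> XS"
proof -
  have "(\<lambda>_. 0::real) \<in> XS" unfolding Xspace_def by (auto intro!: exI[of _ 1] AE_I2 simp: Ys_nn)
  note z = this
  show ?thesis by (intro XS_dom[OF _ z, where c="\<bar>c\<bar>"]) auto
qed

lemma XS_add: assumes "X \<in> XS" "Z \<in> XS" shows "(\<lambda>\<omega>. X \<omega> + Z \<omega>) \<in> XS"
proof -
  obtain C where C: "C > 0" "AE \<omega> in M. \<bar>X \<omega>\<bar> \<le> C * (Ys \<omega> + 1)"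
    using assms(1) by (auto simp: Xspace_def)
  obtain D where D: "D > 0" "AE \<omega> in M. \<bar>Z \<omega>\<bar> \<le> D * (Ys \<omega> + 1)"
    using assms(2) by (auto simp: Xspace_def)
  have "AE \<omega> in M. \<bar>X \<omega> + Z \<omega>\<bar> \<le> (C + D) * (Ys \<omega> + 1)"
    using C(2) D(2) by eventually_elim (auto simp: distrib_right)
  then show ?thesis using assms C D unfolding Xspace_def
    by (auto intro!: exI[of _ "C + D"])
qed

lemma XS_mult: assumes "X \<in> XS" shows "(\<lambda>\<omega>. c * X \<omega>) \<in> XS"
proof -
  obtain C where C: "C > 0" "AE \<omega> in M. \<bar>X \<omega>\<bar> \<le> C * (Ys \<omega> + 1)"
    using assms(1) by (auto simp: Xspace_def)
  have "AE \<omega> in M. \<bar>c * X \<omega>\<bar> \<le> ((\<bar>c\<bar> + 1) * C) * (Ys \<omega> + 1)"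
    using C(2) AE_space
  proof eventually_elim
    case (elim \<omega>)
    have "\<bar>c * X \<omega>\<bar> = \<bar>c\<bar> * \<bar>X \<omega>\<bar>" by (simp add: abs_mult)
    also have "\<dots> \<le> (\<bar>c\<bar> + 1) * \<bar>X \<omega>\<bar>" by (simp add: mult_right_mono)
    also have "\<dots> \<le> (\<bar>c\<bar> + 1) * (C * (Ys \<omega> + 1))" using elim by (intro mult_left_mono) auto
    finally show ?case by (simp add: mult.assoc)
  qed
  then show ?thesis using assms C unfolding Xspace_def
    by (auto intro!: exI[of _ "(\<bar>c\<bar> + 1) * C"])
qed

lemma XS_minus: "X \<in> XS \<Longrightarrow> (\<lambda>\<omega>. - X \<omega>) \<in> XS"
  using XS_mult[of X "-1"] by simp

lemma XS_diff: "X \<in> XS \<Longrightarrow> Z \<in> XS \<Longrightarrow> (\<lambda>\<omega>. X \<omega> - Z \<omega>) \<in> XS"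
  using XS_add[OF _ XS_minus, of X Z] by simp

lemma XS_sum: "finite I \<Longrightarrow> (\<And>i. i \<in> I \<Longrightarrow> f i \<in> XS) \<Longrightarrow> (\<lambda>\<omega>. \<Sum>i\<in>I. f i \<omega>) \<in> XS"
  by (induction I rule: finite_induct) (auto intro: XS_const XS_add)

lemma XS_ind: "A \<in> sets M \<Longrightarrow> indicator A \<in> XS"
  by (rule XS_dom[OF _ XS_const[of 0], where c=1]) (auto intro!: AE_I2 simp: indicator_def)


lemma Ys_int: assumes "Q \<in> Qs" shows "integrable Q Ys"
  and "integral\<^sup>L Q Ys \<le> enn2real (SUP Q\<in>Qs. \<integral>\<^sup>+ \<omega>. ennreal \<bar>Ys \<omega>\<bar> \<partial>Q)"
proof -
  let ?S = "(SUP Q\<in>Qs. \<integral>\<^sup>+ \<omega>. ennreal \<bar>Ys \<omega>\<bar> \<partial>Q)"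
  have le: "(\<integral>\<^sup>+ \<omega>. ennreal \<bar>Ys \<omega>\<bar> \<partial>Q) \<le> ?S"
    using assms by (rule SUP_upper)
  have meas: "Ys \<in> borel_measurable Q"
    by (rule meas_Q[OF Qs_sets[OF assms] Ys_meas])
  show int: "integrable Q Ys"
    using le Ys_L1 meas by (intro integrableI_bounded) auto
  have "ennreal (norm (integral\<^sup>L Q Ys)) \<le> (\<integral>\<^sup>+ \<omega>. ennreal (norm (Ys \<omega>)) \<partial>Q)"
    by (rule integral_norm_bound_ennreal[OF int])
  also have "\<dots> \<le> ?S" using le by simp
  finally have "enn2real (ennreal (norm (integral\<^sup>L Q Ys))) \<le> enn2real ?S"
    using Ys_L1 by (intro enn2real_mono) auto
  then show "integral\<^sup>L Q Ys \<le> enn2real ?S" by simp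
qed

lemma X_bound: assumes "X \<in> XS" shows "\<exists>K. \<forall>Q\<in>Qs. integrable Q X \<and> \<bar>integral\<^sup>L Q X\<bar> \<le> K"
proof -
  let ?S = "enn2real (SUP Q\<in>Qs. \<integral>\<^sup>+ \<omega>. ennreal \<bar>Ys \<omega>\<bar> \<partial>Q)"
  obtain C where C: "C > 0" "AE \<omega> in M. \<bar>X \<omega>\<bar> \<le> C * (Ys \<omega> + 1)"
    using assms by (auto simp: Xspace_def)
  have "integrable Q X \<and> \<bar>integral\<^sup>L Q X\<bar> \<le> C * (?S + 1)" if Q: "Q \<in> Qs" for Q
  proof -
    have AEQ: "AE \<omega> in Q. \<bar>X \<omega>\<bar> \<le> C * (Ys \<omega> + 1)"
      using absolutely_continuous_AE[OF Qs_sets[OF Q] Qs_ac[OF Q] C(2)] .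
    have sp: "AE \<omega> in Q. 0 \<le> Ys \<omega>" using Ys_nn Qs_space[OF Q] by (auto intro!: AE_I2)
    have iY: "integrable Q (\<lambda>\<omega>. C * (Ys \<omega> + 1))"
      using Ys_int(1)[OF Q] Qs_prob[OF Q] by (auto intro!: p_int_const)
    have mX: "X \<in> borel_measurable Q"
      by (rule meas_Q[OF Qs_sets[OF Q] XS_meas[OF assms]])
    have iX: "integrable Q X"
      using AEQ sp by (intro Bochner_Integration.integrable_bound[OF iY mX]) (auto elim!: eventually_mono)
    have "\<bar>integral\<^sup>L Q X\<bar> \<le> integral\<^sup>L Q (\<lambda>\<omega>. \<bar>X \<omega>\<bar>)" by (rule integral_abs_bound)
    also have "\<dots> \<le> integral\<^sup>L Q (\<lambda>\<omega>. C * (Ys \<omega> + 1))"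
      using iX iY AEQ by (intro integral_mono_AE) auto
    also have "\<dots> = C * (integral\<^sup>L Q Ys + 1)"
      using Ys_int(1)[OF Q] prob_space.prob_space[OF Qs_prob[OF Q]] p_int_const[OF Qs_prob[OF Q]]
      by (simp add: Bochner_Integration.integral_add)
    also have "\<dots> \<le> C * (?S + 1)" using Ys_int(2)[OF Q] C(1) by simp
    finally show ?thesis using iX by simp
  qed
  then show ?thesis by blast
qed

lemma X_int: "X \<in> XS \<Longrightarrow> Q \<in> Qs \<Longrightarrow> integrable Q X"
  using X_bound by blast

lemma rho_bdd: "X \<in> XS \<Longrightarrow> bdd_above ((\<lambda>Q. integral\<^sup>L Q X) ` Qs)"
  using X_bound[of X] by (auto simp: bdd_above_def abs_le_iff)

lemma rho_upper: "X \<in> XS \<Longrightarrow> Q \<in> Qs \<Longrightarrow> integral\<^sup>L Q X \<le> \<rho> X"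
  unfolding rhoQ_def by (rule cSUP_upper[OF _ rho_bdd])

lemma rho_least: "(\<And>Q. Q \<in> Qs \<Longrightarrow> integral\<^sup>L Q X \<le> c) \<Longrightarrow> \<rho> X \<le> c"
  unfolding rhoQ_def using Qne by (rule cSUP_least)

lemma rho_le_const: assumes "X \<in> XS" "AE \<omega> in M. X \<omega> \<le> c" shows "\<rho> X \<le> c"
proof (rule rho_least)
  fix Q assume Q: "Q \<in> Qs"
  have "integral\<^sup>L Q X \<le> integral\<^sup>L Q (\<lambda>_. c)"
    using X_int[OF assms(1) Q] absolutely_continuous_AE[OF Qs_sets[OF Q] Qs_ac[OF Q] assms(2)]
      Qs_prob[OF Q]
    by (intro integral_mono_AE) (auto intro!: p_int_const)
  then show "integral\<^sup>L Q X \<le> c" using Qs_prob[OF Q] by (simp add: prob_space.prob_space)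
qed

abbreviation "QB \<equiv> Qbar M Ys Qs"

lemma QB_D: assumes "Q \<in> QB" shows "prob_space Q" "sets Q = sets M"
  "\<And>X. X \<in> XS \<Longrightarrow> integrable Q X" "\<And>X. X \<in> XS \<Longrightarrow> integral\<^sup>L Q X \<le> \<rho> X"
  using assms by (auto simp: Qbar_def prob_on_def)

lemma QB_ac: assumes "Q \<in> QB" shows "absolutely_continuous M Q"
  unfolding absolutely_continuous_def
proof
  fix A assume A: "A \<in> null_sets M"
  then have As: "A \<in> sets M" by auto
  have "AE \<omega> in M. indicator A \<omega> \<le> (0::real)"
    using AE_not_in[OF A] by eventually_elim auto
  then have "\<rho> (indicator A) \<le> 0" by (intro rho_le_const XS_ind As)
  then have "integral\<^sup>L Q (indicator A) \<le> (0::real)"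
    using QB_D(4)[OF assms XS_ind[OF As]] by simp
  moreover have AQ: "A \<in> sets Q" using As QB_D(2)[OF assms] by simp
  ultimately have "measure Q A = 0" using measure_nonneg[of Q A] by simp
  then show "A \<in> null_sets Q"
    using AQ p_em[OF QB_D(1)[OF assms]] by (simp add: null_sets_def)
qed

end


context Lsetting begin

definition dl :: "(('a \<Rightarrow> real) \<Rightarrow> real) \<Rightarrow> bool" where
  "dl \<phi> \<longleftrightarrow> (\<forall>X\<in>XS. \<forall>Z\<in>XS. \<phi> (\<lambda>\<omega>. X \<omega> + Z \<omega>) = \<phi> X + \<phi> Z)
     \<and> (\<forall>X\<in>XS. \<forall>c. \<phi> (\<lambda>\<omega>. c * X \<omega>) = c * \<phi> X) \<and> (\<forall>X\<in>XS. \<phi> X \<le> \<rho> X)"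

lemma sum_ind_meas: "finite K \<Longrightarrow> (\<And>k. k \<in> K \<Longrightarrow> A k \<in> sets M) \<Longrightarrow>
   (\<lambda>\<omega>. \<Sum>k\<in>K. c k * indicator (A k) \<omega>) \<in> XS"
  by (intro XS_sum XS_mult XS_ind)

context fixes \<phi> assumes dl: "dl \<phi>" begin

lemma phi_add: "X \<in> XS \<Longrightarrow> Z \<in> XS \<Longrightarrow> \<phi> (\<lambda>\<omega>. X \<omega> + Z \<omega>) = \<phi> X + \<phi> Z"
  and phi_mult: "X \<in> XS \<Longrightarrow> \<phi> (\<lambda>\<omega>. c * X \<omega>) = c * \<phi> X"
  and phi_le: "X \<in> XS \<Longrightarrow> \<phi> X \<le> \<rho> X"
  using dl by (auto simp: dl_def)

lemma phi_minus: "X \<in> XS \<Longrightarrow> \<phi> (\<lambda>\<omega>. - X \<omega>) = - \<phi> X"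
  using phi_mult[of X "-1"] by simp

lemma phi_diff: assumes "X \<in> XS" "Z \<in> XS" shows "\<phi> (\<lambda>\<omega>. X \<omega> - Z \<omega>) = \<phi> X - \<phi> Z"
  using phi_add[OF assms(1) XS_minus[OF assms(2)]] phi_minus[OF assms(2)] by simp

lemma phi_mono: assumes "X \<in> XS" "Z \<in> XS" "AE \<omega> in M. X \<omega> \<le> Z \<omega>" shows "\<phi> X \<le> \<phi> Z"
proof -
  have "\<phi> (\<lambda>\<omega>. X \<omega> - Z \<omega>) \<le> \<rho> (\<lambda>\<omega>. X \<omega> - Z \<omega>)" by (rule phi_le[OF XS_diff[OF assms(1,2)]])
  also have "\<dots> \<le> 0" using assms by (intro rho_le_const XS_diff) auto
  finally show ?thesis using phi_diff[OF assms(1,2)] by simp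
qed

lemma phi_cong: "X \<in> XS \<Longrightarrow> Z \<in> XS \<Longrightarrow> AE \<omega> in M. X \<omega> = Z \<omega> \<Longrightarrow> \<phi> X = \<phi> Z"
  by (rule antisym; rule phi_mono) (auto elim: eventually_mono)

lemma phi_const: "\<phi> (\<lambda>_. c) = c"
proof -
  have 1: "\<phi> (\<lambda>_. 1) \<le> 1" using phi_le[OF XS_const[of 1]] rho_le_const[OF XS_const[of 1], of 1] by simp
  have "\<phi> (\<lambda>_. -1) \<le> -1" using phi_le[OF XS_const[of "-1"]] rho_le_const[OF XS_const[of "-1"], of "-1"] by simp
  then have "\<phi> (\<lambda>_. 1) \<ge> 1" using phi_minus[OF XS_const[of 1]] by simp
  with 1 have "\<phi> (\<lambda>_. 1) = 1" by simp
  then show ?thesis using phi_mult[OF XS_const[of 1], of c] by simp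
qed

lemma phi_sum: "finite I \<Longrightarrow> (\<And>i. i \<in> I \<Longrightarrow> f i \<in> XS) \<Longrightarrow> \<phi> (\<lambda>\<omega>. \<Sum>i\<in>I. f i \<omega>) = (\<Sum>i\<in>I. \<phi> (f i))"
proof (induction I rule: finite_induct)
  case empty then show ?case using phi_const[of 0] by simp
next
  case (insert i I)
  then show ?case using phi_add[of "f i" "\<lambda>\<omega>. \<Sum>i\<in>I. f i \<omega>"] XS_sum[of I f] by simp
qed

lemma phi_nonneg: "X \<in> XS \<Longrightarrow> AE \<omega> in M. 0 \<le> X \<omega> \<Longrightarrow> 0 \<le> \<phi> X"
  using phi_mono[OF XS_const[of 0], of X] phi_const[of 0] by simp

lemma phi_cont: assumes "\<And>n. Xn n \<in> XS" "AE \<omega> in M. decseq (\<lambda>n. Xn n \<omega>) \<and> (\<lambda>n. Xn n \<omega>) \<longlonglongrightarrow> 0"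
  shows "(\<lambda>n. \<phi> (Xn n)) \<longlonglongrightarrow> 0"
proof (rule tendsto_sandwich[of "\<lambda>_. 0" _ _ "\<lambda>n. \<rho> (Xn n)"])
  show "(\<lambda>n. \<rho> (Xn n)) \<longlonglongrightarrow> 0" using cont assms unfolding cont_from_above_at_0_def by blast
  show "\<forall>\<^sub>F n in sequentially. \<phi> (Xn n) \<le> \<rho> (Xn n)" using phi_le assms by auto
  have "0 \<le> \<phi> (Xn n)" for n
  proof (intro phi_nonneg assms(1))
    show "AE \<omega> in M. 0 \<le> Xn n \<omega>" using assms(2) by eventually_elim (metis decseq_ge)
  qed
  then show "\<forall>\<^sub>F n in sequentially. 0 \<le> \<phi> (Xn n)" by auto
qed auto

definition "\<mu>\<phi> A = ennreal (\<phi> (indicator A))"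

lemma phi_ind_nonneg: "A \<in> sets M \<Longrightarrow> 0 \<le> \<phi> (indicator A)"
  by (intro phi_nonneg XS_ind) auto

lemma mu_ca: "countably_additive (sets M) \<mu>\<phi>"
  unfolding countably_additive_def
proof safe
  fix A :: "nat \<Rightarrow> 'a set" assume rA: "range A \<subseteq> sets M" and dA: "disjoint_family A"
    and U: "\<Union> (range A) \<in> sets M"
  have As: "A i \<in> sets M" for i using rA by auto
  define D where "D n = (\<lambda>\<omega>. (indicator (\<Union> (range A)) \<omega>::real) - (\<Sum>i<n. indicator (A i) \<omega>))" for n
  have DX: "D n \<in> XS" for n unfolding D_def using As U by (intro XS_diff XS_ind XS_sum) auto
  have sums: "(\<lambda>i. indicator (A i) \<omega>::real) sums indicator (\<Union>i. A i) \<omega>" for \<omega>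
    using dA by (intro indicator_sums) (auto simp: disjoint_family_on_def)
  have "(\<lambda>n. D n \<omega>) \<longlonglongrightarrow> 0" for \<omega>
  proof -
    have "(\<lambda>n. \<Sum>i<n. indicator (A i) \<omega>) \<longlonglongrightarrow> (indicator (\<Union>i. A i) \<omega>::real)"
      using sums[of \<omega>] by (simp add: sums_def)
    then have "(\<lambda>n. indicator (\<Union> (range A)) \<omega> - (\<Sum>i<n. indicator (A i) \<omega>)) \<longlonglongrightarrow>
       indicator (\<Union>i. A i) \<omega> - (indicator (\<Union>i. A i) \<omega>::real)"
      by (intro tendsto_intros)
    then show ?thesis by (simp add: D_def)
  qed
  moreover have "decseq (\<lambda>n. D n \<omega>)" for \<omega>
    by (rule decseq_SucI) (simp add: D_def)
  ultimately have "(\<lambda>n. \<phi> (D n)) \<longlonglongrightarrow> 0" by (intro phi_cont DX) auto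
  moreover have "\<phi> (D n) = \<phi> (indicator (\<Union> (range A))) - (\<Sum>i<n. \<phi> (indicator (A i)))" for n
    unfolding D_def using As U phi_sum[of "{..<n}" "\<lambda>i. indicator (A i)"] XS_ind
    by (subst phi_diff) (auto intro!: XS_ind XS_sum)
  ultimately have "(\<lambda>n. \<phi> (indicator (\<Union> (range A))) - (\<phi> (indicator (\<Union> (range A))) - (\<Sum>i<n. \<phi> (indicator (A i))))) \<longlonglongrightarrow> \<phi> (indicator (\<Union> (range A))) - 0"
    by (intro tendsto_intros) auto
  then have "(\<lambda>i. \<phi> (indicator (A i))) sums \<phi> (indicator (\<Union> (range A)))"
    by (simp add: sums_def)
  then show "(\<Sum>i. \<mu>\<phi> (A i)) = \<mu>\<phi> (\<Union> (range A))"
    unfolding \<mu>\<phi>_def using phi_ind_nonneg[OF As]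
    by (subst suminf_ennreal2) (auto simp: sums_iff)
qed

definition "Q\<phi> = measure_of (space M) (sets M) \<mu>\<phi>"

lemma Qphi_sets: "sets Q\<phi> = sets M" and Qphi_space: "space Q\<phi> = space M"
  unfolding Q\<phi>_def by (simp_all add: sets.space_closed sets.sigma_sets_eq)

lemma Qphi_em: "A \<in> sets M \<Longrightarrow> emeasure Q\<phi> A = ennreal (\<phi> (indicator A))"
  unfolding Q\<phi>_def
proof (subst emeasure_measure_of_sigma[OF sets.sigma_algebra_axioms _ mu_ca])
  have e: "indicator {} = (\<lambda>_. 0::real)" by (auto simp: indicator_def)
  have "\<phi> (indicator {}) = 0" by (subst e) (rule phi_const)
  then show "positive (sets M) \<mu>\<phi>" by (simp add: positive_def \<mu>\<phi>_def)
qed (auto simp: \<mu>\<phi>_def)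

lemma Qphi_prob: "prob_space Q\<phi>"
proof (rule prob_spaceI)
  have "\<phi> (indicator (space M)) = \<phi> (\<lambda>_. 1)"
    by (intro phi_cong XS_ind XS_const AE_I2) auto
  then show "emeasure Q\<phi> (space Q\<phi>) = 1" by (simp add: Qphi_space Qphi_em phi_const)
qed

lemma Qphi_meas: "A \<in> sets M \<Longrightarrow> measure Q\<phi> A = \<phi> (indicator A)"
  using Qphi_em phi_ind_nonneg by (simp add: measure_def)

end
end


context Lsetting begin
context fixes \<phi> assumes dl: "dl \<phi>" begin

lemma Qphi_fm: "finite_measure (Q\<phi> \<phi>)" using Qphi_prob[OF dl] by (rule pfm)

lemma simple_int: assumes "finite K" "\<And>k. k \<in> K \<Longrightarrow> A k \<in> sets M"
  shows "integrable (Q\<phi> \<phi>) (\<lambda>\<omega>. \<Sum>k\<in>K. c k * indicator (A k) \<omega>)"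
    "integral\<^sup>L (Q\<phi> \<phi>) (\<lambda>\<omega>. \<Sum>k\<in>K. c k * indicator (A k) \<omega>) = \<phi> (\<lambda>\<omega>. \<Sum>k\<in>K. c k * indicator (A k) \<omega>)"
proof -
  have AQ: "A k \<in> sets (Q\<phi> \<phi>)" if "k \<in> K" for k using assms(2)[OF that] Qphi_sets[OF dl] by simp
  have fin: "emeasure (Q\<phi> \<phi>) (A k) \<noteq> \<infinity>" for k
    using finite_measure.emeasure_finite[OF Qphi_fm] by simp
  show "integrable (Q\<phi> \<phi>) (\<lambda>\<omega>. \<Sum>k\<in>K. c k * indicator (A k) \<omega>)"
    using AQ fin by (intro Bochner_Integration.integrable_sum integrable_mult_right integrable_real_indicator) (auto simp: less_top)
  have "integral\<^sup>L (Q\<phi> \<phi>) (\<lambda>\<omega>. \<Sum>k\<in>K. c k * indicator (A k) \<omega>) = (\<Sum>k\<in>K. c k * measure (Q\<phi> \<phi>) (A k))"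
    using AQ fin by (subst Bochner_Integration.integral_sum)
      (auto intro!: integrable_mult_right integrable_real_indicator sum.cong simp: less_top)
  also have "\<dots> = (\<Sum>k\<in>K. c k * \<phi> (indicator (A k)))"
    using assms(2) by (intro sum.cong refl) (simp add: Qphi_meas[OF dl])
  also have "\<dots> = (\<Sum>k\<in>K. \<phi> (\<lambda>\<omega>. c k * indicator (A k) \<omega>))"
    using assms(2) by (intro sum.cong refl) (simp add: phi_mult[OF dl] XS_ind)
  also have "\<dots> = \<phi> (\<lambda>\<omega>. \<Sum>k\<in>K. c k * indicator (A k) \<omega>)"
    by (rule phi_sum[OF dl assms(1), symmetric]) (auto intro: XS_mult XS_ind assms(2))
  finally show "integral\<^sup>L (Q\<phi> \<phi>) (\<lambda>\<omega>. \<Sum>k\<in>K. c k * indicator (A k) \<omega>) = \<phi> (\<lambda>\<omega>. \<Sum>k\<in>K. c k * indicator (A k) \<omega>)" .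
qed

lemma small_eq: assumes "\<And>m::nat. m > 0 \<Longrightarrow> \<bar>x\<bar> \<le> 1 / m" shows "x = (0::real)"
proof (rule ccontr)
  assume "x \<noteq> 0"
  then obtain m :: nat where m: "1 / \<bar>x\<bar> < m" using reals_Archimedean2 by blast
  then have "m > 0" using \<open>x \<noteq> 0\<close> by (metis of_nat_0 of_nat_less_0_iff not_gr0 zero_less_divide_1_iff zero_less_abs_iff order_less_trans)
  then have "\<bar>x\<bar> \<le> 1 / m" by (rule assms)
  with m \<open>x \<noteq> 0\<close> \<open>m > 0\<close> show False by (simp add: field_simps)
qed

lemma bdd_int: assumes X: "X \<in> borel_measurable M" and B: "\<And>\<omega>. \<omega> \<in> space M \<Longrightarrow> 0 \<le> X \<omega> \<and> X \<omega> \<le> B"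
  shows "X \<in> XS" "integrable (Q\<phi> \<phi>) X" "integral\<^sup>L (Q\<phi> \<phi>) X = \<phi> X"
proof -
  show XX: "X \<in> XS"
    using B by (intro XS_dom[OF X XS_const[of 0], where c="\<bar>B\<bar>"] AE_I2) force+
  have XQ: "X \<in> borel_measurable (Q\<phi> \<phi>)" by (rule meas_Q[OF Qphi_sets[OF dl] X])
  show iX: "integrable (Q\<phi> \<phi>) X"
    using B Qphi_space[OF dl] XQ by (intro finite_measure.integrable_const_bound[OF Qphi_fm, where B=B] AE_I2) auto
  have "\<bar>\<phi> X - integral\<^sup>L (Q\<phi> \<phi>) X\<bar> \<le> 1 / m" if m: "m > 0" for m :: nat
  proof -
    define K where "K = {0..\<lfloor>m * B\<rfloor>}"
    define A where "A k = {\<omega>\<in>space M. \<lfloor>m * X \<omega>\<rfloor> = k}" for k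
    define s where "s = (\<lambda>\<omega>. \<Sum>k\<in>K. (real_of_int k / m) * indicator (A k) \<omega>)"
    have As: "A k \<in> sets M" for k unfolding A_def using X by measurable
    have sval: "s \<omega> = \<lfloor>m * X \<omega>\<rfloor> / m" if \<omega>: "\<omega> \<in> space M" for \<omega>
    proof -
      let ?j = "\<lfloor>m * X \<omega>\<rfloor>"
      have "?j \<in> K" using B[OF \<omega>] m unfolding K_def
        by (auto intro!: floor_mono mult_left_mono)
      have "s \<omega> = (\<Sum>k\<in>K. if k = ?j then real_of_int ?j / m else 0)"
        unfolding s_def by (rule sum.cong) (auto simp: A_def indicator_def \<omega>)
      then show ?thesis using \<open>?j \<in> K\<close> by (simp add: K_def)
    qed
    have diff: "0 \<le> X \<omega> - s \<omega> \<and> X \<omega> - s \<omega> \<le> 1 / m" if \<omega>: "\<omega> \<in> space M" for \<omega>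
    proof -
      have fl: "real_of_int \<lfloor>m * X \<omega>\<rfloor> \<le> m * X \<omega>" "m * X \<omega> < real_of_int \<lfloor>m * X \<omega>\<rfloor> + 1"
        by linarith+
      have e: "X \<omega> - s \<omega> = (m * X \<omega> - \<lfloor>m * X \<omega>\<rfloor>) / m"
        using sval[OF \<omega>] m by (simp add: field_simps)
      show ?thesis using m unfolding e
        by (intro conjI divide_nonneg_pos divide_right_mono) (use fl in linarith)+
    qed
    have sX: "s \<in> XS" unfolding s_def using As by (intro sum_ind_meas) (auto simp: K_def)
    have fK: "finite K" by (simp add: K_def)
    have is1: "integrable (Q\<phi> \<phi>) s" "integral\<^sup>L (Q\<phi> \<phi>) s = \<phi> s"
      unfolding s_def using simple_int[OF fK, of A "\<lambda>k. real_of_int k / m"] As by auto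
    have p1: "0 \<le> \<phi> X - \<phi> s" "\<phi> X - \<phi> s \<le> 1 / m"
    proof -
      have "\<phi> X - \<phi> s = \<phi> (\<lambda>\<omega>. X \<omega> - s \<omega>)" using phi_diff[OF dl XX sX] by simp
      moreover have "0 \<le> \<phi> (\<lambda>\<omega>. X \<omega> - s \<omega>)"
        using diff by (intro phi_nonneg[OF dl] XS_diff XX sX AE_I2) auto
      moreover have "\<phi> (\<lambda>\<omega>. X \<omega> - s \<omega>) \<le> 1 / m"
        using phi_le[OF dl XS_diff[OF XX sX]] rho_le_const[OF XS_diff[OF XX sX], of "1/m"] diff
        by (auto intro!: AE_I2)
      ultimately show "0 \<le> \<phi> X - \<phi> s" "\<phi> X - \<phi> s \<le> 1 / m" by auto
    qed
    have p2: "0 \<le> integral\<^sup>L (Q\<phi> \<phi>) X - integral\<^sup>L (Q\<phi> \<phi>) s" "integral\<^sup>L (Q\<phi> \<phi>) X - integral\<^sup>L (Q\<phi> \<phi>) s \<le> 1 / m"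
    proof -
      have e: "integral\<^sup>L (Q\<phi> \<phi>) X - integral\<^sup>L (Q\<phi> \<phi>) s = integral\<^sup>L (Q\<phi> \<phi>) (\<lambda>\<omega>. X \<omega> - s \<omega>)"
        using iX is1 by simp
      have "0 \<le> integral\<^sup>L (Q\<phi> \<phi>) (\<lambda>\<omega>. X \<omega> - s \<omega>)"
        using diff Qphi_space[OF dl] by (intro integral_nonneg_AE AE_I2) auto
      moreover have "integral\<^sup>L (Q\<phi> \<phi>) (\<lambda>\<omega>. X \<omega> - s \<omega>) \<le> integral\<^sup>L (Q\<phi> \<phi>) (\<lambda>_. 1 / m)"
        using diff Qphi_space[OF dl] iX is1 p_int_const[OF Qphi_prob[OF dl]]
        by (intro integral_mono_AE AE_I2) auto
      ultimately show "0 \<le> integral\<^sup>L (Q\<phi> \<phi>) X - integral\<^sup>L (Q\<phi> \<phi>) s"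
        "integral\<^sup>L (Q\<phi> \<phi>) X - integral\<^sup>L (Q\<phi> \<phi>) s \<le> 1 / m"
        using e prob_space.prob_space[OF Qphi_prob[OF dl]] by auto
    qed
    show ?thesis using p1 p2 is1 by (simp add: abs_le_iff)
  qed
  then have "\<phi> X - integral\<^sup>L (Q\<phi> \<phi>) X = 0" by (rule small_eq)
  then show "integral\<^sup>L (Q\<phi> \<phi>) X = \<phi> X" by simp
qed

end
end


context Lsetting begin
context fixes \<phi> assumes dl: "dl \<phi>" begin

lemma nonneg_int: assumes XX: "X \<in> XS" and nn: "\<And>\<omega>. 0 \<le> X \<omega>"
  shows "integrable (Q\<phi> \<phi>) X \<and> integral\<^sup>L (Q\<phi> \<phi>) X = \<phi> X"
proof -
  define T where "T n = (\<lambda>\<omega>. min (X \<omega>) (real n))" for n :: nat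
  have X: "X \<in> borel_measurable M" by (rule XS_meas[OF XX])
  have Tm: "T n \<in> borel_measurable M" for n unfolding T_def using X by measurable
  have Tb: "T n \<in> XS" "integrable (Q\<phi> \<phi>) (T n)" "integral\<^sup>L (Q\<phi> \<phi>) (T n) = \<phi> (T n)" for n :: nat
    using bdd_int[OF dl Tm[of n], where B="real n"] nn by (auto simp: T_def)
  have ev: "\<forall>\<^sub>F n in sequentially. T n \<omega> = X \<omega>" for \<omega>
  proof (rule eventually_sequentiallyI[of "nat \<lceil>X \<omega>\<rceil>"])
    fix n assume "nat \<lceil>X \<omega>\<rceil> \<le> n"
    then have "X \<omega> \<le> real n" by linarith
    then show "T n \<omega> = X \<omega>" by (simp add: T_def)
  qed
  have Tlim: "(\<lambda>n. T n \<omega>) \<longlonglongrightarrow> X \<omega>" for \<omega> using ev[of \<omega>] by (rule tendsto_eventually)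
  have Tmono: "mono (\<lambda>n. T n \<omega>)" for \<omega> by (auto simp: mono_def T_def)
  define R where "R n = (\<lambda>\<omega>. X \<omega> - T n \<omega>)" for n
  have RX: "R n \<in> XS" for n unfolding R_def by (intro XS_diff XX Tb)
  have "(\<lambda>n. R n \<omega>) \<longlonglongrightarrow> 0" for \<omega>
    using tendsto_diff[OF tendsto_const[of "X \<omega>"] Tlim[of \<omega>]] by (simp add: R_def)
  moreover have "decseq (\<lambda>n. R n \<omega>)" for \<omega>
    using Tmono[of \<omega>] by (auto simp: decseq_def mono_def R_def)
  ultimately have "(\<lambda>n. \<phi> (R n)) \<longlonglongrightarrow> 0" by (intro phi_cont[OF dl] RX) auto
  moreover have "\<phi> (R n) = \<phi> X - \<phi> (T n)" for n unfolding R_def by (rule phi_diff[OF dl XX Tb(1)])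
  ultimately have "(\<lambda>n. \<phi> X - (\<phi> X - \<phi> (T n))) \<longlonglongrightarrow> \<phi> X - 0"
    by (intro tendsto_intros) auto
  then have lim: "(\<lambda>n. integral\<^sup>L (Q\<phi> \<phi>) (T n)) \<longlonglongrightarrow> \<phi> X" by (simp add: Tb(3))
  have XQ: "X \<in> borel_measurable (Q\<phi> \<phi>)" by (rule meas_Q[OF Qphi_sets[OF dl] X])
  show ?thesis
    using integrable_monotone_convergence[OF Tb(2) _ _ lim XQ]
      integral_monotone_convergence[OF Tb(2) _ _ lim XQ] Tmono Tlim by auto
qed

lemma all_int: assumes XX: "X \<in> XS" shows "integrable (Q\<phi> \<phi>) X" "integral\<^sup>L (Q\<phi> \<phi>) X = \<phi> X"
proof -
  define Xp where "Xp = (\<lambda>\<omega>. max (X \<omega>) 0)"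
  define Xm where "Xm = (\<lambda>\<omega>. max (- X \<omega>) 0)"
  have X: "X \<in> borel_measurable M" by (rule XS_meas[OF XX])
  have Xp: "Xp \<in> XS" unfolding Xp_def using X by (intro XS_dom[OF _ XX, where c=0] AE_I2) auto
  have Xm: "Xm \<in> XS" unfolding Xm_def using X by (intro XS_dom[OF _ XX, where c=0] AE_I2) auto
  have eq: "X = (\<lambda>\<omega>. Xp \<omega> - Xm \<omega>)" by (auto simp: Xp_def Xm_def)
  have p: "integrable (Q\<phi> \<phi>) Xp \<and> integral\<^sup>L (Q\<phi> \<phi>) Xp = \<phi> Xp" by (rule nonneg_int[OF Xp]) (simp add: Xp_def)
  have m: "integrable (Q\<phi> \<phi>) Xm \<and> integral\<^sup>L (Q\<phi> \<phi>) Xm = \<phi> Xm" by (rule nonneg_int[OF Xm]) (simp add: Xm_def)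
  show "integrable (Q\<phi> \<phi>) X" using p m by (subst eq) auto
  show "integral\<^sup>L (Q\<phi> \<phi>) X = \<phi> X" using p m phi_diff[OF dl Xp Xm] by (subst (1 2) eq) auto
qed

lemma daniell: "Q\<phi> \<phi> \<in> QB" "\<And>X. X \<in> XS \<Longrightarrow> integral\<^sup>L (Q\<phi> \<phi>) X = \<phi> X"
  "\<And>A. A \<in> sets M \<Longrightarrow> emeasure (Q\<phi> \<phi>) A = ennreal (\<phi> (indicator A))"
  using Qphi_prob[OF dl] Qphi_sets[OF dl] all_int phi_le[OF dl] Qphi_em[OF dl]
  by (auto simp: Qbar_def prob_on_def)

end
end


context Lsetting begin

lemma QB_dl: assumes "Q \<in> QB" shows "dl (\<lambda>X. integral\<^sup>L Q X)"
  unfolding dl_def using QB_D[OF assms] by auto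

definition "cdata n c Q \<longleftrightarrow> n \<ge> (1::nat) \<and> (\<forall>i<n. c i \<ge> (0::real) \<and> Q i \<in> Qs) \<and> (\<Sum>i<n. c i) = 1"
definition "cval (n::nat) (c::nat \<Rightarrow> real) (Q::nat \<Rightarrow> 'a measure) = (\<lambda>X::'a \<Rightarrow> real. \<Sum>i<n. c i * integral\<^sup>L (Q i) X)"

lemma cdata_dl: assumes "cdata n c Q" shows "dl (cval n c Q)"
proof -
  have cQ: "\<And>i. i < n \<Longrightarrow> c i \<ge> 0 \<and> Q i \<in> Qs" and s1: "(\<Sum>i<n. c i) = 1"
    using assms by (auto simp: cdata_def)
  have add: "cval n c Q (\<lambda>\<omega>. X \<omega> + Z \<omega>) = cval n c Q X + cval n c Q Z" if "X \<in> XS" "Z \<in> XS" for X Z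
    unfolding cval_def using that cQ X_int
    by (simp add: sum.distrib[symmetric] distrib_left Bochner_Integration.integral_add)
  have mult: "cval n c Q (\<lambda>\<omega>. a * X \<omega>) = a * cval n c Q X" for X a
    unfolding cval_def by (simp add: sum_distrib_left mult.left_commute)
  have le: "cval n c Q X \<le> \<rho> X" if "X \<in> XS" for X
  proof -
    have "cval n c Q X \<le> (\<Sum>i<n. c i * \<rho> X)"
      unfolding cval_def using cQ rho_upper[OF that] by (intro sum_mono mult_left_mono) auto
    also have "\<dots> = \<rho> X" using s1 by (simp add: sum_distrib_right[symmetric])
    finally show ?thesis .
  qed
  show ?thesis using add mult le by (auto simp: dl_def)
qed

lemma cdata_em: assumes "cdata n c Q" "A \<in> sets M"
  shows "emeasure (Q\<phi> (cval n c Q)) A = (\<Sum>i<n. ennreal (c i) * emeasure (Q i) A)"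
proof -
  have cQ: "\<And>i. i < n \<Longrightarrow> c i \<ge> 0 \<and> Q i \<in> Qs"
    using assms by (auto simp: cdata_def)
  have "emeasure (Q\<phi> (cval n c Q)) A = ennreal (cval n c Q (indicator A))"
    by (rule daniell(3)[OF cdata_dl[OF assms(1)] assms(2)])
  also have "cval n c Q (indicator A) = (\<Sum>i<n. c i * measure (Q i) A)"
    unfolding cval_def
  proof (intro sum.cong refl)
    fix i assume "i \<in> {..<n}"
    then have Q: "Q i \<in> Qs" using cQ by auto
    show "c i * integral\<^sup>L (Q i) (indicator A) = c i * measure (Q i) A"
      using assms(2) Qs_sets[OF Q] finite_measure.emeasure_finite[OF pfm[OF Qs_prob[OF Q]]]
      by simp
  qed
  also have "ennreal (\<Sum>i<n. c i * measure (Q i) A) = (\<Sum>i<n. ennreal (c i * measure (Q i) A))"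
    using cQ by (subst sum_ennreal) auto
  also have "\<dots> = (\<Sum>i<n. ennreal (c i) * emeasure (Q i) A)"
    using cQ by (intro sum.cong refl) (simp add: ennreal_mult p_em[OF Qs_prob])
  finally show ?thesis .
qed

lemma cdata_co: assumes "cdata n c Q" shows "Q\<phi> (cval n c Q) \<in> co_measures M Qs"
  unfolding co_measures_def using assms cdata_em[OF assms] Qphi_sets[OF cdata_dl[OF assms]]
  by (auto simp: cdata_def intro!: exI[of _ n] exI[of _ c] exI[of _ Q])

lemma co_QB: assumes "\<mu> \<in> co_measures M Qs" shows "\<mu> \<in> QB"
proof -
  obtain n c Q where d: "cdata n c Q" and sets: "sets \<mu> = sets M"
    and em: "\<forall>A\<in>sets M. emeasure \<mu> A = (\<Sum>i<n. ennreal (c i) * emeasure (Q i) A)"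
    using assms unfolding co_measures_def cdata_def by blast
  have "\<mu> = Q\<phi> (cval n c Q)"
    by (rule measure_eqI) (auto simp: sets Qphi_sets[OF cdata_dl[OF d]] em cdata_em[OF d])
  then show ?thesis using daniell(1)[OF cdata_dl[OF d]] by simp
qed

lemma cdata_single: "Q0 \<in> Qs \<Longrightarrow> cdata 1 (\<lambda>_. 1) (\<lambda>_. Q0) \<and> cval 1 (\<lambda>_. 1) (\<lambda>_. Q0) = (\<lambda>X::'a \<Rightarrow> real. integral\<^sup>L Q0 X)"
  unfolding cdata_def cval_def by (simp add: One_nat_def)

lemma cdata_ext: assumes "cdata n c Q" "Q1 \<in> Qs" "0 \<le> t" "t \<le> 1"
  shows "\<exists>n' c' Q'. cdata n' c' Q' \<and> cval n' c' Q' = (\<lambda>X. (1 - t) * cval n c Q X + t * integral\<^sup>L Q1 X)"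
proof (intro exI conjI)
  let ?c = "\<lambda>i. if i < n then (1 - t) * c i else t"
  let ?Q = "\<lambda>i. if i < n then Q i else Q1"
  have s: "(\<Sum>i<n. ?c i) = (1 - t) * (\<Sum>i<n. c i)"
    by (simp add: sum_distrib_left)
  show "cdata (Suc n) ?c ?Q" using assms s by (auto simp: cdata_def less_Suc_eq)
  have "cval (Suc n) ?c ?Q X = (1 - t) * cval n c Q X + t * integral\<^sup>L Q1 X" for X
    unfolding cval_def by (simp add: sum_distrib_left mult.assoc)
  then show "cval (Suc n) ?c ?Q = (\<lambda>X. (1 - t) * cval n c Q X + t * integral\<^sup>L Q1 X)" by auto
qed

end


lemma lin_int: fixes F :: "('a \<Rightarrow> real) set" and a :: "('a \<Rightarrow> real) \<Rightarrow> real"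
  shows "finite F \<Longrightarrow> (\<And>X. X \<in> F \<Longrightarrow> integrable Q X) \<Longrightarrow>
  integral\<^sup>L Q (\<lambda>\<omega>. \<Sum>X\<in>F. a X * X \<omega>) = (\<Sum>X\<in>F. a X * integral\<^sup>L Q X)"
  by (subst Bochner_Integration.integral_sum) (auto intro!: integrable_mult_right)

context Lsetting begin

lemma approx:
  assumes Q: "Q \<in> QB" and F: "finite F" "F \<subseteq> XS" and e: "\<epsilon> > 0"
  shows "\<exists>n c Q'. cdata n c Q' \<and> (\<forall>X\<in>F. \<bar>cval n c Q' X - integral\<^sup>L Q X\<bar> < \<epsilon>)"
proof (rule ccontr)
  assume neg: "\<not> ?thesis"
  define v where "v X = integral\<^sup>L Q X" for X :: "'a \<Rightarrow> real"
  define CV where "CV = {cval n c Q' | n c Q'. cdata n c Q'}"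
  define dd where "dd \<psi> = (\<Sum>X\<in>F. (\<psi> X - v X)\<^sup>2)" for \<psi> :: "('a \<Rightarrow> real) \<Rightarrow> real"
  have CVdl: "dl \<psi>" if "\<psi> \<in> CV" for \<psi> using that cdata_dl by (auto simp: CV_def)
  have dge: "\<epsilon>\<^sup>2 \<le> dd \<psi>" if h\<psi>: "\<psi> \<in> CV" for \<psi>
  proof -
    obtain n c Q' where d: "cdata n c Q'" and \<psi>: "\<psi> = cval n c Q'" using h\<psi> unfolding CV_def by blast
    obtain X where X: "X \<in> F" "\<epsilon> \<le> \<bar>\<psi> X - v X\<bar>" using neg d \<psi> by (force simp: v_def not_less)
    have "\<epsilon>\<^sup>2 \<le> \<bar>\<psi> X - v X\<bar>\<^sup>2" using X e by (intro power_mono) auto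
    also have "\<dots> = (\<psi> X - v X)\<^sup>2" by simp
    also have "\<dots> \<le> dd \<psi>" unfolding dd_def using X F by (intro member_le_sum) auto
    finally show ?thesis .
  qed
  obtain Q0 where Q0: "Q0 \<in> Qs" using Qne by auto
  have CVne: "CV \<noteq> {}" using cdata_single[OF Q0] by (auto simp: CV_def)
  have bdd: "bdd_below (dd ` CV)" using dge by (auto simp: bdd_below_def)
  define d where "d = Inf (dd ` CV)"
  have dlow: "d \<le> dd \<psi>" if "\<psi> \<in> CV" for \<psi> unfolding d_def using bdd that by (simp add: cInf_lower)
  have "\<epsilon>\<^sup>2 \<le> d" unfolding d_def using CVne dge by (intro cInf_greatest) auto
  then have dpos: "d > 0" using e by (smt (verit) zero_less_power)
  define K where "K X = \<bar>\<rho> X\<bar> + \<bar>\<rho> (\<lambda>\<omega>. - X \<omega>)\<bar>" for X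
  have Kpsi: "\<bar>\<psi> X\<bar> \<le> K X" if "\<psi> \<in> CV" "X \<in> XS" for \<psi> X
    using phi_le[OF CVdl[OF that(1)] that(2)] phi_le[OF CVdl[OF that(1)] XS_minus[OF that(2)]]
      phi_minus[OF CVdl[OF that(1)] that(2)]
    unfolding K_def by linarith
  have KQ: "\<bar>integral\<^sup>L Q1 X\<bar> \<le> K X" if "Q1 \<in> Qs" "X \<in> XS" for Q1 X
    using rho_upper[OF that(2,1)] rho_upper[OF XS_minus[OF that(2)] that(1)]
    unfolding K_def by simp
  define D where "D = (\<Sum>X\<in>F. (2 * K X)\<^sup>2)"
  have D0: "D \<ge> 0" unfolding D_def by (intro sum_nonneg) auto
  define t where "t = min 1 (d / (2 * (D + 1)))"
  have t0: "0 < t" "t \<le> 1" using dpos D0 by (auto simp: t_def)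
  have tD: "t * D \<le> d / 2"
  proof -
    have "t * D \<le> d / (2 * (D + 1)) * D" using D0 by (intro mult_right_mono) (auto simp: t_def)
    also have "\<dots> = (d / 2) * (D / (D + 1))" using D0 by (simp add: field_simps)
    also have "\<dots> \<le> (d / 2) * 1" using D0 dpos by (intro mult_left_mono) auto
    finally show ?thesis by simp
  qed
  define \<eta> where "\<eta> = t * d / 2"
  have "\<eta> > 0" using t0 dpos by (simp add: \<eta>_def)
  then have "d < d + \<eta>" by simp
  then obtain y where "y \<in> dd ` CV" "y < d + \<eta>" unfolding d_def using CVne by (metis cInf_lessD image_is_empty d_def)
  then obtain \<psi>0 where \<psi>0: "\<psi>0 \<in> CV" "dd \<psi>0 < d + \<eta>" by auto
  obtain n0 c0 Q0' where d0: "cdata n0 c0 Q0'" and \<psi>0eq: "\<psi>0 = cval n0 c0 Q0'" using \<psi>0(1) unfolding CV_def by blast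
  define a where "a X = v X - \<psi>0 X" for X
  have key: "(\<Sum>X\<in>F. a X * (integral\<^sup>L Q1 X - \<psi>0 X)) \<le> d / 2" if Q1: "Q1 \<in> Qs" for Q1
  proof -
    define b where "b X = integral\<^sup>L Q1 X - \<psi>0 X" for X
    define Sab where "Sab = (\<Sum>X\<in>F. a X * b X)"
    define Sbb where "Sbb = (\<Sum>X\<in>F. (b X)\<^sup>2)"
    obtain n' c' Q' where "cdata n' c' Q'" and ceq: "cval n' c' Q' = (\<lambda>X. (1 - t) * \<psi>0 X + t * integral\<^sup>L Q1 X)"
      using cdata_ext[OF d0 Q1, of t] t0 \<psi>0eq by auto
    then have "(\<lambda>X. (1 - t) * \<psi>0 X + t * integral\<^sup>L Q1 X) \<in> CV" unfolding CV_def by (metis (mono_tags, lifting) mem_Collect_eq)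
    then have "d \<le> dd (\<lambda>X. (1 - t) * \<psi>0 X + t * integral\<^sup>L Q1 X)" by (rule dlow)
    also have "dd (\<lambda>X. (1 - t) * \<psi>0 X + t * integral\<^sup>L Q1 X) = (\<Sum>X\<in>F. (t * b X - a X)\<^sup>2)"
      unfolding dd_def by (intro sum.cong refl) (simp add: a_def b_def algebra_simps)
    also have "\<dots> = dd \<psi>0 - 2 * t * Sab + t\<^sup>2 * Sbb"
      unfolding dd_def Sab_def Sbb_def a_def
      by (simp add: power2_eq_square algebra_simps sum.distrib sum_subtractf sum_distrib_left)
    finally have 1: "d \<le> dd \<psi>0 - 2 * t * Sab + t\<^sup>2 * Sbb" .
    have "Sbb \<le> D" unfolding Sbb_def D_def
    proof (intro sum_mono)
      fix X assume X: "X \<in> F"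
      then have XX: "X \<in> XS" using F by auto
      have "\<bar>b X\<bar> \<le> 2 * K X" using KQ[OF Q1 XX] Kpsi[OF \<psi>0(1) XX] unfolding b_def by linarith
      then have "\<bar>b X\<bar>\<^sup>2 \<le> (2 * K X)\<^sup>2" by (intro power_mono) auto
      then show "(b X)\<^sup>2 \<le> (2 * K X)\<^sup>2" by simp
    qed
    then have "t\<^sup>2 * Sbb \<le> t\<^sup>2 * D" by (intro mult_left_mono) auto
    with 1 \<psi>0(2) have "2 * t * Sab < \<eta> + t\<^sup>2 * D" by linarith
    also have "\<dots> = t * (d / 2 + t * D)" by (simp add: \<eta>_def power2_eq_square algebra_simps)
    also have "\<dots> \<le> t * d" using tD t0 by (intro mult_left_mono) auto
    finally have "t * (2 * Sab) < t * d" by (simp add: mult.assoc mult.left_commute)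
    then have "2 * Sab < d" using t0 by (simp add: mult_less_cancel_left_pos)
    then show ?thesis unfolding Sab_def b_def by simp
  qed
  define Z where "Z = (\<lambda>\<omega>. \<Sum>X\<in>F. a X * X \<omega>)"
  have ZX: "Z \<in> XS" unfolding Z_def using F by (intro XS_sum XS_mult) auto
  have "\<rho> Z \<le> (\<Sum>X\<in>F. a X * \<psi>0 X) + d / 2"
  proof (rule rho_least)
    fix Q1 assume Q1: "Q1 \<in> Qs"
    have "integral\<^sup>L Q1 Z = (\<Sum>X\<in>F. a X * integral\<^sup>L Q1 X)"
      unfolding Z_def using F X_int[OF _ Q1] by (intro lin_int) auto
    also have "\<dots> = (\<Sum>X\<in>F. a X * \<psi>0 X) + (\<Sum>X\<in>F. a X * (integral\<^sup>L Q1 X - \<psi>0 X))"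
      by (simp add: sum.distrib[symmetric] algebra_simps)
    also have "\<dots> \<le> (\<Sum>X\<in>F. a X * \<psi>0 X) + d / 2" using key[OF Q1] by simp
    finally show "integral\<^sup>L Q1 Z \<le> (\<Sum>X\<in>F. a X * \<psi>0 X) + d / 2" .
  qed
  moreover have "integral\<^sup>L Q Z = (\<Sum>X\<in>F. a X * \<psi>0 X) + dd \<psi>0"
  proof -
    have "integral\<^sup>L Q Z = (\<Sum>X\<in>F. a X * v X)"
      unfolding Z_def v_def using F QB_D(3)[OF Q] by (intro lin_int) auto
    also have "\<dots> = (\<Sum>X\<in>F. a X * \<psi>0 X) + dd \<psi>0"
      unfolding dd_def a_def by (simp add: sum.distrib[symmetric] power2_eq_square algebra_simps)
    finally show ?thesis .
  qed
  moreover have "integral\<^sup>L Q Z \<le> \<rho> Z" by (rule QB_D(4)[OF Q ZX])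
  moreover have "d \<le> dd \<psi>0" by (rule dlow[OF \<psi>0(1)])
  ultimately show False using dpos by linarith
qed

end


lemma small_eq2: assumes "\<And>e. e > 0 \<Longrightarrow> \<bar>x\<bar> < e" shows "x = (0::real)"
proof (rule ccontr)
  assume "x \<noteq> 0" then have "\<bar>x\<bar> > 0" by simp
  from assms[OF this] show False by simp
qed

context Lsetting begin

abbreviation "fmap \<equiv> (\<lambda>Q. restrict (\<lambda>X. integral\<^sup>L Q X) XS)"
abbreviation "PT \<equiv> product_topology (\<lambda>_. euclideanreal) XS"

lemma sig_eq: "sigmaQX M Ys Qs = pullback_topology QB fmap PT"
  by (simp add: sigmaQX_def)

lemma top_sig: "topspace (sigmaQX M Ys Qs) = QB"
  by (auto simp: sig_eq topspace_pullback_topology)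

lemma dense: assumes Q: "Q \<in> QB" shows "Q \<in> (sigmaQX M Ys Qs) closure_of (co_measures M Qs)"
  unfolding in_closure_of top_sig
proof (intro conjI allI impI Q)
  fix T assume "Q \<in> T \<and> openin (sigmaQX M Ys Qs) T"
  then obtain U where QT: "Q \<in> T" and U: "openin PT U" and T: "T = fmap -` U \<inter> QB"
    by (auto simp: sig_eq openin_pullback_topology)
  have "fmap Q \<in> U" using QT T by auto
  then obtain V where finV: "finite {i \<in> XS. V i \<noteq> topspace euclideanreal}"
    and opV: "\<forall>i\<in>XS. openin euclideanreal (V i)" and QV: "fmap Q \<in> Pi\<^sub>E XS V" and VU: "Pi\<^sub>E XS V \<subseteq> U"
    using U unfolding openin_product_topology_alt by blast
  define F where "F = {i \<in> XS. V i \<noteq> UNIV}"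
  have F: "finite F" "F \<subseteq> XS" using finV by (auto simp: F_def)
  have "\<forall>X\<in>F. \<exists>e>0. ball (integral\<^sup>L Q X) e \<subseteq> V X"
  proof
    fix X assume X: "X \<in> F"
    then have XX: "X \<in> XS" using F by blast
    then have "openin euclidean (V X)" using opV by blast
    then have "open (V X)" by (subst open_openin)
    moreover have "fmap Q X \<in> V X" by (rule PiE_mem[OF QV XX])
    then have "integral\<^sup>L Q X \<in> V X" using XX by simp
    ultimately show "\<exists>e>0. ball (integral\<^sup>L Q X) e \<subseteq> V X" by (rule open_contains_ball_eq[THEN iffD1])
  qed
  then obtain e where e0: "\<forall>X\<in>F. e X > 0 \<and> ball (integral\<^sup>L Q X) (e X) \<subseteq> V X"
    by (rule bchoice[THEN exE]) blast
  then have e: "\<And>X. X \<in> F \<Longrightarrow> e X > 0 \<and> ball (integral\<^sup>L Q X) (e X) \<subseteq> V X" by blast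
  define \<epsilon> where "\<epsilon> = Min (insert 1 (e ` F))"
  have \<epsilon>0: "\<epsilon> > 0" unfolding \<epsilon>_def using F e by auto
  have \<epsilon>e: "\<epsilon> \<le> e X" if "X \<in> F" for X unfolding \<epsilon>_def using F that by auto
  obtain n c Q' where d: "cdata n c Q'" and ap: "\<forall>X\<in>F. \<bar>cval n c Q' X - integral\<^sup>L Q X\<bar> < \<epsilon>"
    using approx[OF Q F \<epsilon>0] by blast
  define \<mu> where "\<mu> = Q\<phi> (cval n c Q')"
  have \<mu>co: "\<mu> \<in> co_measures M Qs" unfolding \<mu>_def by (rule cdata_co[OF d])
  have \<mu>QB: "\<mu> \<in> QB" unfolding \<mu>_def by (rule daniell(1)[OF cdata_dl[OF d]])
  have \<mu>int: "integral\<^sup>L \<mu> X = cval n c Q' X" if "X \<in> XS" for X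
    unfolding \<mu>_def by (rule daniell(2)[OF cdata_dl[OF d] that])
  have fmu: "fmap \<mu> \<in> Pi\<^sub>E XS V"
  proof (subst restrict_PiE_iff, intro ballI)
    fix X assume X: "X \<in> XS"
    show "integral\<^sup>L \<mu> X \<in> V X"
    proof (cases "X \<in> F")
      case True
      have "dist (integral\<^sup>L Q X) (integral\<^sup>L \<mu> X) < e X"
        using ap True \<epsilon>e[OF True] \<mu>int[OF X] by (force simp: dist_real_def abs_minus_commute)
      then show ?thesis using e[OF True] by auto
    next
      case False
      then show ?thesis using X by (auto simp: F_def)
    qed
  qed
  then have "fmap \<mu> \<in> U" using VU by blast
  then have "\<mu> \<in> T" using T \<mu>QB by blast
  then show "\<exists>y. y \<in> co_measures M Qs \<and> y \<in> T" using \<mu>co by auto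
qed

end


context Lsetting begin

lemma closure_app:
  assumes \<phi>: "\<phi> \<in> PT closure_of (fmap ` QB)" and F: "finite F" "F \<subseteq> XS" and e: "e > 0"
  shows "\<exists>Q\<in>QB. \<forall>X\<in>F. \<bar>integral\<^sup>L Q X - \<phi> X\<bar> < e"
proof -
  define V where "V X = (if X \<in> F then ball (\<phi> X) e else UNIV)" for X
  have op: "openin PT (Pi\<^sub>E XS V)"
  proof (rule product_topology_basis)
    show "openin euclideanreal (V i)" for i by (subst open_openin[symmetric]) (simp add: V_def)
    show "finite {i. V i \<noteq> topspace euclideanreal}"
      by (rule finite_subset[OF _ F(1)]) (auto simp: V_def)
  qed
  have cl: "\<phi> \<in> topspace PT \<and> (\<forall>T. \<phi> \<in> T \<and> openin PT T \<longrightarrow> (\<exists>y. y \<in> fmap ` QB \<and> y \<in> T))"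
    using \<phi> unfolding in_closure_of .
  then have "\<phi> \<in> Pi\<^sub>E XS V" using e by (auto simp: V_def PiE_iff)
  then obtain y where "y \<in> fmap ` QB" "y \<in> Pi\<^sub>E XS V" using cl op by blast
  then obtain Q where Q: "Q \<in> QB" "fmap Q \<in> Pi\<^sub>E XS V" by blast
  have "\<bar>integral\<^sup>L Q X - \<phi> X\<bar> < e" if X: "X \<in> F" for X
  proof -
    have XX: "X \<in> XS" using X F by blast
    have "fmap Q X \<in> V X" by (rule PiE_mem[OF Q(2) XX])
    then show ?thesis using X XX by (simp add: V_def dist_real_def abs_minus_commute)
  qed
  then show ?thesis using Q(1) by blast
qed

lemma closure_dl: assumes \<phi>: "\<phi> \<in> PT closure_of (fmap ` QB)" shows "dl \<phi>"
  unfolding dl_def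
proof (intro conjI ballI allI)
  fix X Z assume X: "X \<in> XS" and Z: "Z \<in> XS"
  let ?W = "\<lambda>\<omega>. X \<omega> + Z \<omega>"
  have W: "?W \<in> XS" by (rule XS_add[OF X Z])
  have "\<phi> ?W - \<phi> X - \<phi> Z = 0"
  proof (rule small_eq2)
    fix e :: real assume e: "e > 0"
    obtain Q where Q: "Q \<in> QB" and ap: "\<forall>Y\<in>{X, Z, ?W}. \<bar>integral\<^sup>L Q Y - \<phi> Y\<bar> < e / 3"
      using closure_app[OF \<phi>, of "{X, Z, ?W}" "e / 3"] X Z W e by auto
    have "integral\<^sup>L Q ?W = integral\<^sup>L Q X + integral\<^sup>L Q Z"
      using QB_D(3)[OF Q X] QB_D(3)[OF Q Z] by simp
    then show "\<bar>\<phi> ?W - \<phi> X - \<phi> Z\<bar> < e" using ap unfolding abs_less_iff by auto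
  qed
  then show "\<phi> ?W = \<phi> X + \<phi> Z" by simp
next
  fix X c assume X: "X \<in> XS"
  let ?W = "\<lambda>\<omega>. c * X \<omega>"
  have W: "?W \<in> XS" by (rule XS_mult[OF X])
  have "\<phi> ?W - c * \<phi> X = 0"
  proof (rule small_eq2)
    fix e :: real assume e: "e > 0"
    define e' where "e' = e / (1 + \<bar>c\<bar>)"
    have e': "e' > 0" using e by (simp add: e'_def add_pos_nonneg)
    obtain Q where Q: "Q \<in> QB" and ap: "\<forall>Y\<in>{X, ?W}. \<bar>integral\<^sup>L Q Y - \<phi> Y\<bar> < e'"
      using closure_app[OF \<phi>, of "{X, ?W}" e'] X W e' by auto
    have eq: "integral\<^sup>L Q ?W = c * integral\<^sup>L Q X" by simp
    have a1: "\<bar>\<phi> ?W - integral\<^sup>L Q ?W\<bar> < e'" using ap by (auto simp: abs_minus_commute)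
    have a2: "\<bar>integral\<^sup>L Q X - \<phi> X\<bar> < e'" using ap by auto
    have "\<phi> ?W - c * \<phi> X = (\<phi> ?W - integral\<^sup>L Q ?W) + c * (integral\<^sup>L Q X - \<phi> X)"
      unfolding eq by (simp add: algebra_simps)
    then have t: "\<bar>\<phi> ?W - c * \<phi> X\<bar> \<le> \<bar>\<phi> ?W - integral\<^sup>L Q ?W\<bar> + \<bar>c\<bar> * \<bar>integral\<^sup>L Q X - \<phi> X\<bar>"
      by (metis abs_mult abs_triangle_ineq)
    have "\<bar>c\<bar> * \<bar>integral\<^sup>L Q X - \<phi> X\<bar> \<le> \<bar>c\<bar> * e'" using a2 by (intro mult_left_mono) auto
    moreover have "e' + \<bar>c\<bar> * e' = e' * (1 + \<bar>c\<bar>)" by (simp add: algebra_simps)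
    moreover have "e' * (1 + \<bar>c\<bar>) = e" unfolding e'_def by (simp add: add_pos_nonneg[of 1 "\<bar>c\<bar>", THEN less_imp_neq, symmetric])
    ultimately show "\<bar>\<phi> ?W - c * \<phi> X\<bar> < e" using t a1 by linarith
  qed
  then show "\<phi> ?W = c * \<phi> X" by simp
next
  fix X assume X: "X \<in> XS"
  show "\<phi> X \<le> \<rho> X"
  proof (rule field_le_epsilon)
    fix e :: real assume e: "e > 0"
    obtain Q where Q: "Q \<in> QB" and ap: "\<forall>Y\<in>{X}. \<bar>integral\<^sup>L Q Y - \<phi> Y\<bar> < e"
      using closure_app[OF \<phi>, of "{X}" e] X e by auto
    then show "\<phi> X \<le> \<rho> X + e" using QB_D(4)[OF Q X] by auto
  qed
qed

lemma image_closed: "closedin PT (fmap ` QB)"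
proof -
  have sub: "fmap ` QB \<subseteq> topspace PT" by auto
  have "PT closure_of (fmap ` QB) \<subseteq> fmap ` QB"
  proof
    fix \<phi> assume \<phi>: "\<phi> \<in> PT closure_of (fmap ` QB)"
    have dl: "dl \<phi>" by (rule closure_dl[OF \<phi>])
    have "\<phi> \<in> topspace PT" using \<phi> closure_of_subset_topspace[of PT] by blast
    then have ext: "\<phi> \<in> extensional XS" by (simp add: PiE_def)
    have "fmap (Q\<phi> \<phi>) = \<phi>"
    proof
      fix X show "fmap (Q\<phi> \<phi>) X = \<phi> X"
        using daniell(2)[OF dl, of X] ext by (cases "X \<in> XS") (auto simp: extensional_def)
    qed
    then show "\<phi> \<in> fmap ` QB" using daniell(1)[OF dl] by (metis imageI)
  qed
  then have "PT closure_of (fmap ` QB) = fmap ` QB" using closure_of_subset[OF sub] by blast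
  then show ?thesis by (simp add: closure_of_eq)
qed

lemma image_compact: "compactin PT (fmap ` QB)"
proof (rule closed_compactin[OF _ _ image_closed])
  show "compactin PT (Pi\<^sub>E XS (\<lambda>X. {- \<rho> (\<lambda>\<omega>. - X \<omega>) .. \<rho> X}))"
    by (simp add: compactin_PiE)
  show "fmap ` QB \<subseteq> Pi\<^sub>E XS (\<lambda>X. {- \<rho> (\<lambda>\<omega>. - X \<omega>) .. \<rho> X})"
  proof (clarsimp simp: restrict_PiE_iff)
    fix Q X assume Q: "Q \<in> QB" and X: "X \<in> XS"
    have "integral\<^sup>L Q (\<lambda>\<omega>. - X \<omega>) \<le> \<rho> (\<lambda>\<omega>. - X \<omega>)" by (rule QB_D(4)[OF Q XS_minus[OF X]])
    then show "- \<rho> (\<lambda>\<omega>. - X \<omega>) \<le> integral\<^sup>L Q X \<and> integral\<^sup>L Q X \<le> \<rho> X"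
      using QB_D(4)[OF Q X] by simp
  qed
qed

lemma compact_sig: "compact_space (sigmaQX M Ys Qs)"
  unfolding compact_space_def compactin_def top_sig
proof (intro conjI allI impI subset_refl)
  fix \<U> assume \<U>: "(\<forall>U\<in>\<U>. openin (sigmaQX M Ys Qs) U) \<and> QB \<subseteq> \<Union> \<U>"
  have "\<forall>u\<in>\<U>. \<exists>V. openin PT V \<and> u = fmap -` V \<inter> QB"
    using \<U> by (auto simp: sig_eq openin_pullback_topology)
  then obtain G where G: "\<forall>u\<in>\<U>. openin PT (G u) \<and> u = fmap -` (G u) \<inter> QB"
    by (rule bchoice[THEN exE]) blast
  have cov: "fmap ` QB \<subseteq> \<Union> (G ` \<U>)"
  proof
    fix y assume "y \<in> fmap ` QB"
    then obtain Q where Q: "Q \<in> QB" "y = fmap Q" by blast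
    then obtain u where u: "u \<in> \<U>" "Q \<in> u" using \<U> by blast
    then have "Q \<in> fmap -` (G u) \<inter> QB" using G by blast
    then show "y \<in> \<Union> (G ` \<U>)" using u Q by blast
  qed
  have opG: "\<forall>v\<in>G ` \<U>. openin PT v" using G by blast
  have cc: "\<forall>\<U>'. (\<forall>U\<in>\<U>'. openin PT U) \<and> fmap ` QB \<subseteq> \<Union> \<U>' \<longrightarrow> (\<exists>\<F>. finite \<F> \<and> \<F> \<subseteq> \<U>' \<and> fmap ` QB \<subseteq> \<Union> \<F>)"
    using image_compact unfolding compactin_def by (rule conjunct2)
  obtain \<W> where W: "finite \<W>" "\<W> \<subseteq> G ` \<U>" "fmap ` QB \<subseteq> \<Union> \<W>"
    using cc[rule_format, OF conjI[OF opG cov]] by blast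
  obtain \<F> where Fs: "\<F> \<subseteq> \<U>" "finite \<F>" "\<W> = G ` \<F>"
    using finite_subset_image[OF W(1,2)] by blast
  show "\<exists>\<F>. finite \<F> \<and> \<F> \<subseteq> \<U> \<and> QB \<subseteq> \<Union> \<F>"
  proof (intro exI conjI)
    show "QB \<subseteq> \<Union> \<F>"
    proof
      fix Q assume Q: "Q \<in> QB"
      then obtain u where u: "u \<in> \<F>" "fmap Q \<in> G u" using W(3) Fs(3) by blast
      then have "Q \<in> fmap -` (G u) \<inter> QB" using Q by blast
      then show "Q \<in> \<Union> \<F>" using u G Fs(1) by blast
    qed
  qed (use Fs in auto)
qed

end


theorem lemma6p1:
  fixes M :: "'a measure" and T :: real and Fs :: "real \<Rightarrow> 'a set set"
    and Y :: "real \<Rightarrow> 'a \<Rightarrow> real" and Qs :: "'a measure set"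
  assumes "prob_space M"
    and "0 < T"
    and "filtration_std M T Fs"
    and "process_std M T Fs Y"
    and "Qs \<noteq> {}"
    and "\<forall>Q\<in>Qs. prob_on M Q \<and> absolutely_continuous M Q"
    and "L1Q M Qs (Ystar T Y)"
    and "cont_from_above_at_0 M (Ystar T Y) Qs"
  shows "compact_space (sigmaQX M (Ystar T Y) Qs)
    \<and> co_measures M Qs \<subseteq> Qbar M (Ystar T Y) Qs
    \<and> (sigmaQX M (Ystar T Y) Qs) closure_of (co_measures M Qs) = Qbar M (Ystar T Y) Qs
    \<and> (\<forall>Q\<in>Qbar M (Ystar T Y) Qs. absolutely_continuous M Q)"
proof -
  have nn: "0 \<le> Ystar T Y \<omega>" if \<omega>: "\<omega> \<in> space M" for \<omega>
  proof -
    obtain B where B: "\<forall>t\<in>{0..T}. \<bar>Y t \<omega>\<bar> \<le> B"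
      using assms(4) \<omega> unfolding process_std_def by blast
    have bdd: "bdd_above ((\<lambda>t. \<bar>Y t \<omega>\<bar>) ` {0..T})" using B by (auto simp: bdd_above_def)
    have "0 \<in> {0..T}" using assms(2) by simp
    have "0 \<le> \<bar>Y 0 \<omega>\<bar>" by simp
    also have "\<dots> \<le> (SUP t\<in>{0..T}. \<bar>Y t \<omega>\<bar>)" by (rule cSUP_upper[OF \<open>0 \<in> {0..T}\<close> bdd])
    finally show ?thesis by (simp add: Ystar_def)
  qed
  interpret Lsetting M "Ystar T Y" Qs
    by (rule Lsetting.intro[OF assms(1) assms(5) _ _ nn _ assms(8)]) (use assms(6,7) in \<open>auto simp: L1Q_def\<close>)
  have cl: "(sigmaQX M (Ystar T Y) Qs) closure_of (co_measures M Qs) = Qbar M (Ystar T Y) Qs"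
  proof
    show "sigmaQX M (Ystar T Y) Qs closure_of co_measures M Qs \<subseteq> QB"
      using closure_of_subset_topspace[of "sigmaQX M (Ystar T Y) Qs"] top_sig by blast
    show "QB \<subseteq> sigmaQX M (Ystar T Y) Qs closure_of co_measures M Qs" using dense by blast
  qed
  show ?thesis using compact_sig co_QB cl QB_ac by blast
qed


end
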